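(* Let $0\le d\le\rho(m)-1$ and let $n\ge h$ be an integer such that $n\not\equiv h-\rho(m)+L_1(d)+j\pmod{L_2}$ for every $j\in\{0,1,\dots,d\}$. Then \[ \sum_{f\in A(d)} y(n-f)\;<\;Tot(d). \]
   Context: For $u\in\mathbb{R}$ let $\mathbf 1[u]=1$ if $u\ge 0$ and $\mathbf 1[u]=0$ if $u<0$. Let $m$ be a positive integer and let $\rho(m)$ denote the number of primes $p$ with $2m<p<3m$; assume $\rho(m)\ge 2$. List these primes as $p_0>p_1>\dots>p_{\rho(m)-1}$ and put $\alpha_i=3m-p_i$. Let $k=(6m-1)\rho(m)$, $\mu_i=\lfloor k/p_i\rfloor$, $\beta_i=k-p_i\mu_i$. Define weights $\bar a_j$, $1\le j\le k$: if $\rho(m)$ is even, $\bar a_j=2$ if $j=\ell p_i$ for some $i$ and some $\ell$ with $1\le \ell\le 3\rho(m)/2$, $\bar a_j=-2$ if $j=\ell p_i$ with $3\rho(m)/2<\ell\le 2\rho(m)$, and $\bar a_j=0$ otherwise; if $\rho(m)$ is odd, $\bar a_j=2$ if $j=\ell p_i$ with $1\le\ell\le (3\rho(m)-1)/2$, $\bar a_j=-2$ if $j=\ell p_i$ with $(3\rho(m)+1)/2\le \ell\le 2\rho(m)-2$, $\bar a_j=-1$ if $j=\ell p_i$ with $\ell\in\{2\rho(m)-1,2\rho(m)\}$, and $\bar a_j=0$ otherwise (well defined since the sets $\{\ell p_i:1\le\ell\le2\rho(m)\}$ are pairwise disjoint). Let $\bar\theta=2\rho(m)$. For each $i$ define $x^{\alpha_i}(t)$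 for $0\le t\le k-1$ by $x^{\alpha_i}(t)=1$ if $t=\beta_i+\ell p_i$ for some $0\le \ell\le\mu_i-1$ and $x^{\alpha_i}(t)=0$ otherwise, and for $t\ge k$ by $x^{\alpha_i}(t)=\mathbf 1\big[\sum_{j=1}^k \bar a_j x^{\alpha_i}(t-j)-\bar\theta\big]$. Let $h=\rho(m)k$. For $1\le f\le h$ let $b_f=\bar a_j$ if $f=\rho(m)j$ with $1\le j\le k$, and $b_f=0$ otherwise. Define $(y(n))_{n\ge0}$ by $y(\rho(m)j+i)=x^{\alpha_i}(1+j)$ for $0\le j\le k-1$, $0\le i\le\rho(m)-1$, and $y(n)=\mathbf 1\big[\sum_{f=1}^h b_f y(n-f)-\bar\theta\big]$ for $n\ge h$. Let $L_1(d)=\rho(m)\cdot\mathrm{lcm}(p_0,\dots,p_d)$ for $0\le d\le\rho(m)-1$ and $L_2=\rho(m)\cdot\mathrm{lcm}(p_0,\dots,p_{\rho(m)-1})$. For $0\le d\le\rho(m)-1$ let $B_0(d)=\{f\in\mathbb Z:\ 1\le f\le h-d,\ y(h+L_1(d)-\rho(m)-f)=1\}$, $B_{\ell+1}(d)=\{1+f: f\in B_\ell(d)\}$ for $\ell\ge0$, $A(d)=\bigcup_{\ell=0}^{d}B_\ell(d)$, and $Tot(d)=|B_0(d)|$. *)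

theory Defs
  imports Main "HOL-Computational_Algebra.Primes" "HOL-Number_Theory.Cong"
begin

definition ind :: "int \<Rightarrow> int" where
  "ind u = (if u \<ge> 0 then 1 else 0)"

definition primeset :: "nat \<Rightarrow> nat set" where
  "primeset m = {p. prime p \<and> 2*m < p \<and> p < 3*m}"

definition rho :: "nat \<Rightarrow> nat" where
  "rho m = card (primeset m)"

definition pr :: "nat \<Rightarrow> nat \<Rightarrow> nat" where
  "pr m i = rev (sorted_list_of_set (primeset m)) ! i"

definition alpha :: "nat \<Rightarrow> nat \<Rightarrow> nat" where
  "alpha m i = 3*m - pr m i"

definition kk :: "nat \<Rightarrow> nat" where
  "kk m = (6*m - 1) * rho m"

definition mu :: "nat \<Rightarrow> nat \<Rightarrow> nat" where
  "mu m i = kk m div pr m i"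

definition beta :: "nat \<Rightarrow> nat \<Rightarrow> nat" where
  "beta m i = kk m - pr m i * mu m i"

definition wt :: "nat \<Rightarrow> nat \<Rightarrow> int" where
  "wt m l = (if even (rho m) then
               (if 1 \<le> l \<and> 2 * l \<le> 3 * rho m then 2
                else if 3 * rho m < 2 * l \<and> l \<le> 2 * rho m then -2 else 0)
             else
               (if 1 \<le> l \<and> 2 * l \<le> 3 * rho m - 1 then 2
                else if 3 * rho m + 1 \<le> 2 * l \<and> l \<le> 2 * rho m - 2 then -2
                else if l = 2 * rho m - 1 \<or> l = 2 * rho m then -1 else 0))"

definition abar :: "nat \<Rightarrow> nat \<Rightarrow> int" where
  "abar m j = (if \<exists>i l. i < rho m \<and> 1 \<le> l \<and> l \<le> 2 * rho m \<and> j = l * pr m i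
               then wt m (SOME l. \<exists>i. i < rho m \<and> 1 \<le> l \<and> l \<le> 2 * rho m \<and> j = l * pr m i)
               else 0)"

definition thetabar :: "nat \<Rightarrow> int" where
  "thetabar m = 2 * int (rho m)"

text \<open>The sequence x^{alpha_i}(t), indexed here by i (alpha_i is determined by i).\<close>
function xs :: "nat \<Rightarrow> nat \<Rightarrow> nat \<Rightarrow> int" where
  "xs m i t = (if t < kk m then
                 (if \<exists>l. l < mu m i \<and> t = beta m i + l * pr m i then 1 else 0)
               else ind ((\<Sum>j = 1..kk m. abar m j * xs m i (t - j)) - thetabar m))"
  by pat_completeness auto
termination
  by (relation "measure (\<lambda>(m, i, t). t)") auto

definition hh :: "nat \<Rightarrow> nat" where
  "hh m = rho m * kk m"

definition bb :: "nat \<Rightarrow> nat \<Rightarrow> int" where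
  "bb m f = (if rho m dvd f \<and> 1 \<le> f div rho m \<and> f div rho m \<le> kk m
             then abar m (f div rho m) else 0)"

function ys :: "nat \<Rightarrow> nat \<Rightarrow> int" where
  "ys m n = (if n < hh m then xs m (n mod rho m) (1 + n div rho m)
             else ind ((\<Sum>f = 1..hh m. bb m f * ys m (n - f)) - thetabar m))"
  by pat_completeness auto
termination
  by (relation "measure (\<lambda>(m, n). n)") auto

definition L1 :: "nat \<Rightarrow> nat \<Rightarrow> nat" where
  "L1 m d = rho m * Lcm (pr m ` {..d})"

definition L2 :: "nat \<Rightarrow> nat" where
  "L2 m = rho m * Lcm (pr m ` {..<rho m})"

definition B0 :: "nat \<Rightarrow> nat \<Rightarrow> nat set" where
  "B0 m d = {f. 1 \<le> f \<and> f \<le> hh m - d \<and> ys m (hh m + L1 m d - rho m - f) = 1}"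

definition Bl :: "nat \<Rightarrow> nat \<Rightarrow> nat \<Rightarrow> nat set" where
  "Bl m d l = (\<lambda>f. l + f) ` B0 m d"

definition AA :: "nat \<Rightarrow> nat \<Rightarrow> nat set" where
  "AA m d = (\<Union>l\<in>{0..d}. Bl m d l)"

definition Tot :: "nat \<Rightarrow> nat \<Rightarrow> nat" where
  "Tot m d = card (B0 m d)"

end

theory Submission
  imports Defs
begin

declare xs.simps[simp del] ys.simps[simp del]

lemma card_pairwise_cong_le:
  fixes S :: "nat set" and q L :: nat
  assumes S: "S \<subseteq> {1..L}" and q: "q > 0"
    and c: "\<And>x y. x \<in> S \<Longrightarrow> y \<in> S \<Longrightarrow> int q dvd int x - int y"
  shows "card S \<le> (L - 1) div q + 1"
proof -
  have inj: "inj_on (\<lambda>x. (x - 1) div q) S"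
  proof (rule inj_onI)
    fix x y assume xS: "x \<in> S" and yS: "y \<in> S" and e: "(x - 1) div q = (y - 1) div q"
    have x1: "x \<ge> 1" and y1: "y \<ge> 1" using xS yS S by auto
    have "int q dvd int (x - 1) - int (y - 1)" using c[OF xS yS] x1 y1 by (simp add: of_nat_diff)
    hence "int (x - 1) mod int q = int (y - 1) mod int q" by (simp add: mod_eq_dvd_iff)
    hence "(x - 1) mod q = (y - 1) mod q" by (metis of_nat_eq_iff zmod_int)
    hence "x - 1 = y - 1" using e by (metis div_mult_mod_eq)
    thus "x = y" using x1 y1 by simp
  qed
  have "(\<lambda>x. (x - 1) div q) ` S \<subseteq> {0..(L - 1) div q}"
    using S by (force intro!: div_le_mono diff_le_mono)
  hence "card S \<le> card {0..(L - 1) div q}"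
    using card_inj_on_le[OF inj] by blast
  thus ?thesis by simp
qed

lemma card_class_ge:
  fixes q a L :: nat and e :: int
  assumes q: "q > 0"
  shows "L div q \<le> card {x \<in> {a..<a+L}. int q dvd int x - e}"
proof -
  define s where "s = nat ((e - int a) mod int q)"
  have s_lt: "s < q" using q unfolding s_def by (simp add: nat_less_iff)
  have s_int: "int s = (e - int a) mod int q" unfolding s_def using q by simp
  define g where "g j = a + j * q + s" for j
  have inj: "inj_on g {..<L div q}" unfolding g_def inj_on_def using q by auto
  have "g ` {..<L div q} \<subseteq> {x \<in> {a..<a+L}. int q dvd int x - e}"
  proof
    fix x assume "x \<in> g ` {..<L div q}"
    then obtain j where j: "j < L div q" and x: "x = g j" by auto
    have "Suc j * q \<le> (L div q) * q" using j by (intro mult_le_mono1) simp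
    also have "\<dots> \<le> L" by simp
    finally have "j * q + q \<le> L" by simp
    hence "x < a + L" using s_lt unfolding x g_def by simp
    moreover have "int x - e = int q * (int j - (e - int a) div int q)"
    proof -
      have "int x - e = int a + int j * int q + (e - int a) mod int q - e"
        unfolding x g_def using s_int by simp
      also have "\<dots> = int j * int q - int q * ((e - int a) div int q)"
        using div_mult_mod_eq[of "e - int a" "int q"] by (simp add: algebra_simps)
      finally show ?thesis by (simp add: algebra_simps)
    qed
    ultimately show "x \<in> {x \<in> {a..<a+L}. int q dvd int x - e}"
      unfolding x g_def by auto
  qed
  hence "card {..<L div q} \<le> card {x \<in> {a..<a+L}. int q dvd int x - e}"
    using card_inj_on_le[OF inj] by auto
  thus ?thesis by simp
qed

lemma div_helper1:
  fixes r k p :: nat assumes "r > 0" "k > 0"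
  shows "(r * k - 1) div (r * p) = (k - 1) div p"
proof -
  have "r * k - 1 = (r - 1) + r * (k - 1)" using assms
    by (cases k) (auto simp: algebra_simps)
  hence "(r * k - 1) div r = (k - 1) + (r - 1) div r"
    using assms div_mult_self2[of r "r - 1" "k - 1"] by simp
  hence "(r * k - 1) div r = k - 1" using assms by simp
  thus ?thesis by (simp add: div_mult2_eq)
qed

lemma div_helper2:
  fixes r k p :: nat assumes "r > 0"
  shows "(r * k) div (r * p) = k div p"
  using assms by simp

lemma sum_three:
  fixes x y z :: int and a b c :: nat
  shows "(\<Sum>l=1..a+b+c. if l \<le> a then x else if l \<le> a+b then y else z)
         = int a * x + int b * y + int c * z"
proof -
  let ?g = "\<lambda>l. if l \<le> a then x else if l \<le> a+b then y else z"
  have U: "{1..a+b+c} = ({1..a} \<union> {a<..a+b}) \<union> {a+b<..a+b+c}" by auto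
  have "sum ?g {1..a+b+c} = sum ?g ({1..a} \<union> {a<..a+b}) + sum ?g {a+b<..a+b+c}"
    unfolding U by (rule sum.union_disjoint) auto
  also have "sum ?g ({1..a} \<union> {a<..a+b}) = sum ?g {1..a} + sum ?g {a<..a+b}"
    by (rule sum.union_disjoint) auto
  also have "sum ?g {1..a} = sum (\<lambda>_. x) {1..a}" by (rule sum.cong) auto
  also have "sum ?g {a<..a+b} = sum (\<lambda>_. y) {a<..a+b}" by (rule sum.cong) auto
  also have "sum ?g {a+b<..a+b+c} = sum (\<lambda>_. z) {a+b<..a+b+c}" by (rule sum.cong) auto
  finally show ?thesis by simp
qed


locale L16 =
  fixes m :: nat
  assumes mpos: "m > 0" and r2: "rho m \<ge> 2"
begin

abbreviation "r \<equiv> rho m"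
abbreviation "k \<equiv> kk m"
abbreviation "p \<equiv> pr m"

lemma fin: "finite (primeset m)"
  unfolding primeset_def by (rule finite_subset[of _ "{..<3*m}"]) auto

lemma r_bound: "2 * r \<le> m + 1"
proof -
  have inj: "inj_on (\<lambda>x. x div 2) (primeset m)"
  proof (rule inj_onI)
    fix x y assume x: "x \<in> primeset m" and y: "y \<in> primeset m" and e: "x div 2 = y div 2"
    have "x > 2" "y > 2" using x y mpos unfolding primeset_def by auto
    hence "odd x" "odd y" using x y prime_odd_nat unfolding primeset_def by auto
    thus "x = y" using e by (metis odd_two_times_div_two_succ)
  qed
  have "(\<lambda>x. x div 2) ` primeset m \<subseteq> {m..(3*m - 1) div 2}"
    unfolding primeset_def by (auto intro!: div_le_mono) 
  hence "card (primeset m) \<le> card {m..(3*m - 1) div 2}"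
    using card_inj_on_le[OF inj] by blast
  hence a: "r \<le> (3*m - 1) div 2 + 1 - m" unfolding rho_def by simp
  have "2 * ((3*m - 1) div 2) \<le> 3*m - 1" by simp
  thus ?thesis using a mpos by linarith
qed

lemma pr_in: "i < r \<Longrightarrow> p i \<in> primeset m"
proof -
  assume "i < r"
  hence "i < length (rev (sorted_list_of_set (primeset m)))"
    using fin by (simp add: rho_def length_sorted_list_of_set)
  hence "p i \<in> set (rev (sorted_list_of_set (primeset m)))"
    unfolding pr_def by (rule nth_mem)
  thus ?thesis using fin by (simp add: set_sorted_list_of_set)
qed

lemma pr_inj: "i < r \<Longrightarrow> j < r \<Longrightarrow> p i = p j \<Longrightarrow> i = j"
proof -
  assume i: "i < r" and j: "j < r" and e: "p i = p j"
  have d: "distinct (rev (sorted_list_of_set (primeset m)))"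
    by (simp add: distinct_sorted_list_of_set)
  have l: "length (rev (sorted_list_of_set (primeset m))) = r"
    using fin by (simp add: rho_def length_sorted_list_of_set)
  show "i = j" using nth_eq_iff_index_eq[OF d] i j e l unfolding pr_def by auto
qed

lemma pr_prime: "i < r \<Longrightarrow> prime (p i)"
  using pr_in unfolding primeset_def by auto
lemma pr_gt: "i < r \<Longrightarrow> 2 * m < p i"
  using pr_in unfolding primeset_def by auto
lemma pr_lt: "i < r \<Longrightarrow> p i < 3 * m"
  using pr_in unfolding primeset_def by auto

lemma r_lt_p: "i < r \<Longrightarrow> 2 * r < p i"
  using pr_gt[of i] r_bound mpos by linarith

lemma p_pos: "i < r \<Longrightarrow> p i > 0"
  using pr_gt[of i] by linarith

lemma r_pos: "r > 0" using r2 by linarith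

lemma k_def': "k = (6*m - 1) * r" by (simp add: kk_def)

lemma k_pos: "k > 0" using mpos r_pos by (simp add: kk_def)

lemma twor_p_le: "i < r \<Longrightarrow> 2 * r * p i \<le> k - 1"
proof -
  assume i: "i < r"
  have "p i \<le> 3*m - 1" using pr_lt[OF i] by linarith
  hence "2 * r * p i \<le> 2 * r * (3*m - 1)" by simp
  also have "\<dots> \<le> k - 1" using r_pos mpos unfolding k_def'
    by (simp add: algebra_simps diff_mult_distrib2)
  finally show ?thesis .
qed

lemma k_lt_pp: "i < r \<Longrightarrow> j < r \<Longrightarrow> k < p i * p j"
proof -
  assume i: "i < r" and j: "j < r"
  have a: "2*m+1 \<le> p i" "2*m+1 \<le> p j" using pr_gt[OF i] pr_gt[OF j] by auto
  have "(2*m+1)*(2*m+1) \<le> p i * p j" using a by (intro mult_le_mono)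
  moreover have "2 * k \<le> (6*m - 1) * (m+1)" using r_bound unfolding k_def'
    by (metis mult.left_commute mult_le_mono2)
  moreover have "(6*m - 1) * (m+1) < 2 * ((2*m+1)*(2*m+1))" using mpos
    by (simp add: algebra_simps diff_mult_distrib diff_mult_distrib2)
  ultimately show ?thesis by linarith
qed


definition inE :: "nat \<Rightarrow> bool" where
  "inE j = (\<exists>i l. i < r \<and> 1 \<le> l \<and> l \<le> 2 * r \<and> j = l * p i)"

lemma p_dvd_other: "i < r \<Longrightarrow> i' < r \<Longrightarrow> i \<noteq> i' \<Longrightarrow> p i dvd x * p i' \<Longrightarrow> p i dvd x"
proof -
  assume i: "i < r" and i': "i' < r" and ne: "i \<noteq> i'" and d: "p i dvd x * p i'"
  have "\<not> p i dvd p i'"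
  proof
    assume "p i dvd p i'"
    hence "p i = p i'" using primes_dvd_imp_eq pr_prime[OF i] pr_prime[OF i'] by blast
    thus False using pr_inj[OF i i'] ne by blast
  qed
  thus ?thesis using d prime_dvd_multD[OF pr_prime[OF i]] by blast
qed

lemma p_ndvd_small: "i < r \<Longrightarrow> 0 < x \<Longrightarrow> x \<le> 2 * r \<Longrightarrow> \<not> p i dvd x"
  using r_lt_p[of i] by (auto dest: dvd_imp_le)

lemma abar_lp: assumes i: "i < r" and l1: "1 \<le> l" and l2: "l \<le> 2 * r"
  shows "abar m (l * p i) = wt m l"
proof -
  have ex: "\<exists>i' l'. i' < r \<and> 1 \<le> l' \<and> l' \<le> 2 * r \<and> l * p i = l' * p i'"
    using i l1 l2 by blast
  have "(SOME l'. \<exists>i'. i' < r \<and> 1 \<le> l' \<and> l' \<le> 2 * r \<and> l * p i = l' * p i') = l"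
  proof (rule some_equality)
    show "\<exists>i'. i' < r \<and> 1 \<le> l \<and> l \<le> 2 * r \<and> l * p i = l * p i'" using i l1 l2 by blast
  next
    fix x assume "\<exists>i'. i' < r \<and> 1 \<le> x \<and> x \<le> 2 * r \<and> l * p i = x * p i'"
    then obtain i' where i': "i' < r" and x1: "1 \<le> x" and x2: "x \<le> 2 * r"
      and e: "l * p i = x * p i'" by blast
    show "x = l"
    proof (cases "i' = i")
      case True thus ?thesis using e p_pos[OF i] by simp
    next
      case False
      have "p i dvd x * p i'" using e by (metis dvd_triv_right)
      hence "p i dvd x" using p_dvd_other[OF i i'] False by blast
      thus ?thesis using p_ndvd_small[OF i] x1 x2 by simp
    qed
  qed
  thus ?thesis using ex unfolding abar_def by simp
qed

lemma abar_notE: "\<not> inE j \<Longrightarrow> abar m j = 0"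
  unfolding abar_def inE_def by auto

lemma wt_le2: "wt m l \<le> 2" unfolding wt_def by auto

lemma abar_le2: "abar m j \<le> 2" unfolding abar_def using wt_le2 by auto

lemma wt_sum: "(\<Sum>l=1..2*r. wt m l) = 2 * int r"
proof (cases "even r")
  case True
  then obtain s where s: "r = 2 * s" by blast
  have "(\<Sum>l=1..2*r. wt m l) = (\<Sum>l=1..3*s+s+0. if l \<le> 3*s then 2 else if l \<le> 3*s+s then -2 else 0)"
    using s True by (intro sum.cong) (auto simp: wt_def)
  also have "\<dots> = 2 * int r" using s by (subst sum_three) simp
  finally show ?thesis .
next
  case False
  then obtain s where s: "r = 2 * s + 1" using oddE by blast
  have s1: "s \<ge> 1" using s r2 by simp
  have "(\<Sum>l=1..2*r. wt m l) = (\<Sum>l=1..(3*s+1)+(s-1)+2. if l \<le> 3*s+1 then 2 else if l \<le> (3*s+1)+(s-1) then -2 else -1)"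
    using s False s1 by (intro sum.cong) (auto simp: wt_def)
  also have "\<dots> = 2 * int r" using s s1 by (subst sum_three) (simp add: of_nat_diff)
  finally show ?thesis .
qed


lemma same_mod_eq:
  assumes i: "i < r" and i': "i' < r" and ne: "i \<noteq> i'"
    and l1: "1 \<le> l1" "l1 \<le> 2 * r" and l2: "1 \<le> l2" "l2 \<le> 2 * r"
    and t1: "l1 * p i' \<le> t" and t2: "l2 * p i' \<le> t"
    and e: "(t - l1 * p i') mod p i = (t - l2 * p i') mod p i"
  shows "l1 = l2"
proof -
  have key: "a = b" if ab: "b \<le> a" and a1: "1 \<le> a" "a \<le> 2 * r" and b1: "1 \<le> b" "b \<le> 2 * r"
    and ta: "a * p i' \<le> t" and tb: "b * p i' \<le> t"
    and ee: "(t - a * p i') mod p i = (t - b * p i') mod p i" for a b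
  proof -
    have le: "t - a * p i' \<le> t - b * p i'" using ab by (simp add: diff_le_mono2)
    have "p i dvd (t - b * p i') - (t - a * p i')"
      using mod_eq_dvd_iff_nat[OF le, of "p i"] ee by metis
    also have "(t - b * p i') - (t - a * p i') = (a - b) * p i'"
      using ta tb ab by (simp add: diff_mult_distrib)
    finally have "p i dvd (a - b)" using p_dvd_other[OF i i' ne] by blast
    hence "a - b = 0" using p_ndvd_small[OF i, of "a - b"] a1 b1 by linarith
    thus "a = b" using ab by simp
  qed
  show ?thesis
  proof (cases "l2 \<le> l1")
    case True show ?thesis using key[OF True l1 l2 t1 t2 e] .
  next
    case False thus ?thesis using key[of l1 l2] l1 l2 t1 t2 e by simp
  qed
qed

lemma xs_char: "i < r \<Longrightarrow> xs m i t = (if t mod p i = k mod p i then 1 else 0)"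
proof (induction t rule: less_induct)
  case (less t)
  note i = less.prems
  define P where "P = p i"
  have Ppos: "P > 0" using p_pos[OF i] unfolding P_def .
  show ?case
  proof (cases "t < k")
    case True
    have beta: "beta m i = k mod P" unfolding beta_def mu_def P_def by (simp add: minus_mult_div_eq_mod)
    have mu: "mu m i = k div P" unfolding mu_def P_def by simp
    have "(\<exists>l. l < mu m i \<and> t = beta m i + l * p i) \<longleftrightarrow> t mod P = k mod P"
    proof
      assume "\<exists>l. l < mu m i \<and> t = beta m i + l * p i"
      then obtain l where "t = k mod P + l * P" using beta unfolding P_def by auto
      thus "t mod P = k mod P" by simp
    next
      assume h: "t mod P = k mod P"
      have t_eq: "t = k mod P + (t div P) * P" using h mod_div_mult_eq[of t P] by linarith
      have k_eq: "k = k mod P + (k div P) * P" using mod_div_mult_eq[of k P] by linarith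
      have "(t div P) * P < (k div P) * P" using True t_eq k_eq by linarith
      hence "t div P < k div P" by (meson mult_less_cancel2)
      thus "\<exists>l. l < mu m i \<and> t = beta m i + l * p i"
        using t_eq beta mu unfolding P_def by auto
    qed
    thus ?thesis using True by (subst xs.simps) (simp add: P_def)
  next
    case False
    hence tk: "k \<le> t" by simp
    have S: "(\<Sum>j = 1..k. abar m j * xs m i (t - j))
        = (\<Sum>j = 1..k. if (t - j) mod P = k mod P then abar m j else 0)"
    proof (rule sum.cong)
      fix j assume "j \<in> {1..k}"
      hence "t - j < t" using tk by auto
      thus "abar m j * xs m i (t - j) = (if (t - j) mod P = k mod P then abar m j else 0)"
        using less.IH[OF _ i] unfolding P_def by simp
    qed simp
    have unf: "xs m i t = ind ((\<Sum>j = 1..k. abar m j * xs m i (t - j)) - thetabar m)"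
      using False by (subst xs.simps) simp
    show ?thesis
    proof (cases "t mod P = k mod P")
      case True
      have c: "(t - j) mod P = k mod P \<longleftrightarrow> P dvd j" if "j \<le> t" for j
      proof -
        have "(t - j) mod P = t mod P \<longleftrightarrow> P dvd t - (t - j)"
          using mod_eq_dvd_iff_nat[of "t - j" t P] by (metis diff_le_self mod_eq_dvd_iff_nat)
        thus ?thesis using True that by simp
      qed
      have S2: "(\<Sum>j = 1..k. if (t - j) mod P = k mod P then abar m j else 0)
          = (\<Sum>j = 1..k. if P dvd j then abar m j else 0)"
        by (rule sum.cong) (use c tk in auto)
      have sub: "(\<lambda>l. l * P) ` {1..2*r} \<subseteq> {1..k}"
      proof
        fix x assume "x \<in> (\<lambda>l. l * P) ` {1..2*r}"
        then obtain l where l: "l \<in> {1..2*r}" "x = l * P" by auto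
        have "l * P \<le> 2 * r * P" using l by simp
        also have "\<dots> \<le> k - 1" using twor_p_le[OF i] unfolding P_def .
        finally show "x \<in> {1..k}" using l Ppos by auto
      qed
      have Z: "\<forall>j\<in>{1..k} - (\<lambda>l. l * P) ` {1..2 * r}. (if P dvd j then abar m j else 0) = 0"
        proof
          fix j assume j: "j \<in> {1..k} - (\<lambda>l. l * P) ` {1..2 * r}"
          show "(if P dvd j then abar m j else 0) = 0"
          proof (cases "P dvd j \<and> inE j")
            case True
            from True have "inE j" by simp
            then obtain i' l where il: "i' < r" "1 \<le> l" "l \<le> 2*r" "j = l * p i'"
              unfolding inE_def by blast
            have "i' = i"
            proof (rule ccontr)
              assume ne: "i' \<noteq> i"
              have "P dvd l * p i'" using True il(4) by simp
              hence "P dvd l" using p_dvd_other[OF i il(1)] ne unfolding P_def by metis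
              thus False using p_ndvd_small[OF i, of l] il(2,3) unfolding P_def by simp
            qed
            hence "j \<in> (\<lambda>l. l * P) ` {1..2 * r}" using il unfolding P_def by auto
            thus ?thesis using j by blast
          next
            case False thus ?thesis using abar_notE by auto
          qed
        qed
      have S3: "(\<Sum>j = 1..k. if P dvd j then abar m j else 0)
          = (\<Sum>j \<in> (\<lambda>l. l * P) ` {1..2*r}. if P dvd j then abar m j else 0)"
        using sum.mono_neutral_left[OF _ sub Z] by simp
      have S4: "(\<Sum>j \<in> (\<lambda>l. l * P) ` {1..2*r}. if P dvd j then abar m j else 0)
          = (\<Sum>l \<in> {1..2*r}. wt m l)"
      proof (subst sum.reindex)
        show "inj_on (\<lambda>l. l * P) {1..2 * r}" using Ppos by (auto simp: inj_on_def)
        show "(\<Sum>l\<in>{1..2 * r}. ((\<lambda>j. if P dvd j then abar m j else 0) \<circ> (\<lambda>l. l * P)) l)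
            = (\<Sum>l\<in>{1..2 * r}. wt m l)"
          by (rule sum.cong) (use abar_lp[OF i] in \<open>auto simp: P_def\<close>)
      qed
      have "(\<Sum>j = 1..k. abar m j * xs m i (t - j)) = 2 * int r"
        using S S2 S3 S4 wt_sum by simp
      thus ?thesis using unf True unfolding P_def by (simp add: ind_def thetabar_def)
    next
      case False
      let ?Q = "{j \<in> {1..k}. (t - j) mod P = k mod P \<and> inE j}"
      have S2: "(\<Sum>j = 1..k. if (t - j) mod P = k mod P then abar m j else 0)
          \<le> (\<Sum>j = 1..k. if j \<in> ?Q then 2 else 0)"
        by (rule sum_mono) (use abar_le2 abar_notE in auto)
      have S3: "(\<Sum>j = 1..k. if j \<in> ?Q then (2::int) else 0) = 2 * int (card ?Q)"
      proof -
        have "(\<Sum>j = 1..k. if j \<in> ?Q then (2::int) else 0) = (\<Sum>j \<in> ?Q. 2)"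
        proof -
          have e: "{1..k} \<inter> ?Q = ?Q" by auto
          show ?thesis using sum.inter_restrict[of "{1..k}" "\<lambda>_. (2::int)" ?Q] e by simp
        qed
        thus ?thesis by simp
      qed
      define Qi where "Qi i' = {j \<in> ?Q. \<exists>l. 1 \<le> l \<and> l \<le> 2 * r \<and> j = l * p i'}" for i'
      have sub: "?Q \<subseteq> (\<Union>i'\<in>{..<r} - {i}. Qi i')"
      proof
        fix j assume j: "j \<in> ?Q"
        then obtain i' l where il: "i' < r" "1 \<le> l" "l \<le> 2*r" "j = l * p i'"
          unfolding inE_def by blast
        have "i' \<noteq> i"
        proof
          assume "i' = i"
          hence "j = l * P" using il unfolding P_def by simp
          hence "(t - j) mod P = t mod P" using j tk
            by (metis atLeastAtMost_iff le_add_diff_inverse2 le_trans mem_Collect_eq mod_mult_self1)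
          thus False using j False by simp
        qed
        thus "j \<in> (\<Union>i'\<in>{..<r} - {i}. Qi i')" using il j unfolding Qi_def by blast
      qed
      have Qi1: "card (Qi i') \<le> 1" if i': "i' \<in> {..<r} - {i}" for i'
      proof -
        have "finite (Qi i')" unfolding Qi_def by auto
        moreover have "\<forall>a\<in>Qi i'. \<forall>b\<in>Qi i'. a = b"
        proof (intro ballI)
          fix a b assume a: "a \<in> Qi i'" and b: "b \<in> Qi i'"
          obtain la where la: "1 \<le> la" "la \<le> 2*r" "a = la * p i'" using a unfolding Qi_def by blast
          obtain lb where lb: "1 \<le> lb" "lb \<le> 2*r" "b = lb * p i'" using b unfolding Qi_def by blast
          have "a \<le> t" "b \<le> t" using a b tk unfolding Qi_def by auto
          moreover have "(t - a) mod P = (t - b) mod P" using a b unfolding Qi_def by auto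
          ultimately have "la = lb" using same_mod_eq[OF i, of i' la lb t] i' la lb
            unfolding P_def by auto
          thus "a = b" using la lb by simp
        qed
        ultimately show ?thesis using card_le_Suc0_iff_eq by auto
      qed
      have "card ?Q \<le> card (\<Union>i'\<in>{..<r} - {i}. Qi i')"
        by (rule card_mono[OF _ sub]) (auto simp: Qi_def)
      also have "\<dots> \<le> (\<Sum>i'\<in>{..<r} - {i}. card (Qi i'))" by (rule card_UN_le) simp
      also have "\<dots> \<le> (\<Sum>i'\<in>{..<r} - {i}. 1)" by (rule sum_mono) (use Qi1 in auto)
      also have "\<dots> = r - 1" using i by simp
      finally have cQ: "card ?Q \<le> r - 1" .
      have "(\<Sum>j = 1..k. abar m j * xs m i (t - j)) \<le> 2 * int (r - 1)"
        using S S2 S3 cQ by linarith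
      hence "(\<Sum>j = 1..k. abar m j * xs m i (t - j)) - thetabar m < 0"
        using r_pos unfolding thetabar_def by linarith
      thus ?thesis using unf False unfolding P_def by (simp add: ind_def)
    qed
  qed
qed


lemma h_def': "hh m = r * k" unfolding hh_def by simp

lemma ys_xs: "ys m n = xs m (n mod r) (1 + n div r)"
proof (induction n rule: less_induct)
  case (less n)
  have rpos: "r > 0" using r_pos .
  show ?case
  proof (cases "n < hh m")
    case True thus ?thesis by (subst ys.simps) simp
  next
    case False
    hence nh: "r * k \<le> n" using h_def' by simp
    hence kn: "k \<le> n div r" using rpos by (metis div_le_mono nonzero_mult_div_cancel_left not_gr0)
    define i where "i = n mod r"
    define t where "t = 1 + n div r"
    have i: "i < r" unfolding i_def using rpos by simp
    have unf: "ys m n = ind ((\<Sum>f = 1..hh m. bb m f * ys m (n - f)) - thetabar m)"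
      using False by (subst ys.simps) simp
    have sub: "(\<lambda>j. r * j) ` {1..k} \<subseteq> {1..hh m}" using rpos h_def' by auto
    have Z: "\<forall>f\<in>{1..hh m} - (\<lambda>j. r * j) ` {1..k}. bb m f * ys m (n - f) = 0"
    proof
      fix f assume f: "f \<in> {1..hh m} - (\<lambda>j. r * j) ` {1..k}"
      show "bb m f * ys m (n - f) = 0"
      proof (cases "r dvd f \<and> 1 \<le> f div r \<and> f div r \<le> k")
        case True
        hence "f = r * (f div r)" by simp
        hence "f \<in> (\<lambda>j. r * j) ` {1..k}" using True by (metis atLeastAtMost_iff image_eqI)
        thus ?thesis using f by blast
      next
        case False
        have "bb m f = 0" unfolding bb_def by (rule if_not_P[OF False])
        thus ?thesis by simp
      qed
    qed
    have S1: "(\<Sum>f = 1..hh m. bb m f * ys m (n - f)) = (\<Sum>f \<in> (\<lambda>j. r * j) ` {1..k}. bb m f * ys m (n - f))"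
      using sum.mono_neutral_left[OF _ sub Z] by simp
    also have "\<dots> = (\<Sum>j = 1..k. bb m (r * j) * ys m (n - r * j))"
      using rpos by (subst sum.reindex) (auto simp: inj_on_def)
    also have "\<dots> = (\<Sum>j = 1..k. abar m j * xs m i (t - j))"
    proof (rule sum.cong)
      fix j assume j: "j \<in> {1..k}"
      have bbj: "bb m (r * j) = abar m j" using rpos j unfolding bb_def by simp
      have jn: "j \<le> n div r" using j kn by simp
      have ndec: "n = r * (n div r) + i" unfolding i_def by simp
      have e: "n - r * j = r * (n div r - j) + i"
        using ndec jn by (metis add_diff_cancel_right' diff_mult_distrib2 le_add1 le_add_diff_inverse mult_le_mono2 ordered_cancel_comm_monoid_diff_class.diff_add_assoc2)
      have m1: "(n - r * j) mod r = i" using e i by simp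
      have d1: "(n - r * j) div r = n div r - j" using e i rpos by simp
      have rj: "r * j > 0" using rpos j by simp
      have "r * j \<le> r * k" using j by simp
      hence "n > 0" using rj nh by linarith
      hence "n - r * j < n" using rj by (rule diff_less[rotated])
      hence "ys m (n - r * j) = xs m i (t - j)"
        using less.IH m1 d1 jn unfolding t_def by (simp add: Suc_diff_le)
      thus "bb m (r * j) * ys m (n - r * j) = abar m j * xs m i (t - j)" using bbj by simp
    qed simp
    finally have S: "(\<Sum>f = 1..hh m. bb m f * ys m (n - f)) = (\<Sum>j = 1..k. abar m j * xs m i (t - j))" .
    have "xs m i t = ind ((\<Sum>j = 1..k. abar m j * xs m i (t - j)) - thetabar m)"
      using kn unfolding t_def by (subst xs.simps) simp
    thus ?thesis using unf S unfolding t_def i_def by simp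
  qed
qed

lemma ys_char: "ys m n = (if (1 + n div r) mod p (n mod r) = k mod p (n mod r) then 1 else 0)"
  using xs_char[of "n mod r" "1 + n div r"] r_pos ys_xs by simp

lemma ys_01: "ys m n = 0 \<or> ys m n = 1" using ys_char by simp

lemma ys_dvd: "ys m t = 1 \<longleftrightarrow> int (r * p (t mod r)) dvd int t - int (r * (k - 1) + t mod r)"
proof -
  define P where "P = p (t mod r)"
  have rpos: "r > 0" using r_pos .
  have "ys m t = 1 \<longleftrightarrow> (1 + t div r) mod P = k mod P" using ys_char unfolding P_def by simp
  also have "\<dots> \<longleftrightarrow> int (1 + t div r) mod int P = int k mod int P"
    by (metis of_nat_eq_iff zmod_int)
  also have "\<dots> \<longleftrightarrow> int P dvd int (1 + t div r) - int k" by (simp add: mod_eq_dvd_iff)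
  also have "\<dots> \<longleftrightarrow> int r * int P dvd int r * (int (1 + t div r) - int k)"
    using rpos by simp
  also have "int r * (int (1 + t div r) - int k) = int t - int (r * (k - 1) + t mod r)"
  proof -
    have "int t = int r * int (t div r) + int (t mod r)"
      by (metis of_nat_add of_nat_mult div_mult_mod_eq mult.commute)
    moreover have "int (r * (k - 1)) = int r * int k - int r"
      using k_pos by (cases k) (simp_all add: algebra_simps)
    ultimately show ?thesis by (simp only: of_nat_add) (simp add: algebra_simps)
  qed
  finally show ?thesis unfolding P_def by simp
qed


lemma small_dvd_eq:
  assumes "int r dvd int a - int b" "a < r" "b < r" shows "a = b"
proof -
  have "int a mod int r = int b mod int r" using assms(1) by (simp add: mod_eq_dvd_iff)
  hence "a mod r = b mod r" by (metis of_nat_eq_iff zmod_int)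
  thus ?thesis using assms by simp
qed

lemma dvd_mod_r:
  assumes "int r dvd int t - int (r * (k - 1) + i)" "i < r" shows "t mod r = i"
proof -
  have "int r dvd (int t - int (r * (k - 1) + i)) + int r * int (k - 1)"
    using assms(1) by (rule dvd_add) simp
  moreover have "(int t - int (r * (k - 1) + i)) + int r * int (k - 1) = int t - int i" by simp
  ultimately have "int r dvd int t - int i" by simp
  hence "int t mod int r = int i mod int r" by (simp add: mod_eq_dvd_iff)
  hence "t mod r = i mod r" by (metis of_nat_eq_iff zmod_int)
  thus ?thesis using assms(2) by simp
qed

lemma two_dvd_zero:
  assumes i: "i < r" and i': "i' < r" and ne: "i \<noteq> i'"
    and d1: "int (r * p i) dvd X" and d2: "int (r * p i') dvd X"
    and small: "\<bar>X\<bar> < int (r * k)"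
  shows "X = 0"
proof -
  define Z where "Z = nat \<bar>X\<bar>"
  have z1: "r * p i dvd Z" and z2: "r * p i' dvd Z" using d1 d2 unfolding Z_def by simp_all
  obtain x where x: "Z = r * p i * x" using z1 by (auto elim: dvdE)
  have "r * p i' dvd r * (p i * x)" using z2 x by (simp add: mult.assoc)
  hence "p i' dvd x * p i" using r_pos by (simp add: mult.commute)
  hence "p i' dvd x" using p_dvd_other[OF i' i] ne by blast
  then obtain y where y: "x = p i' * y" by (auto elim: dvdE)
  have Zeq: "Z = r * (p i * p i') * y" using x y by (simp add: mult.assoc)
  have Zlt: "Z < r * k" using small unfolding Z_def by linarith
  have "y = 0"
  proof (rule ccontr)
    assume "y \<noteq> 0"
    hence "r * (p i * p i') \<le> Z" using Zeq by simp
    moreover have "r * k < r * (p i * p i')" using k_lt_pp[OF i i'] r_pos by simp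
    ultimately show False using Zlt by linarith
  qed
  hence "Z = 0" using Zeq by simp
  thus ?thesis unfolding Z_def by simp
qed

lemma main:
  fixes d n :: nat
  assumes d: "d < r" and nh: "hh m \<le> n"
    and nc: "\<forall>j\<in>{0..d}. \<not> [n = hh m - r + L1 m d + j] (mod L2 m)"
  shows "(\<Sum>f\<in>AA m d. ys m (n - f)) < int (Tot m d)"
proof -
  define h where "h = hh m"
  have h: "h = r * k" unfolding h_def by (rule h_def')
  define M where "M = Lcm (p ` {..d})"
  have Mpos: "M > 0"
  proof -
    have "0 \<notin> p ` {..d}"
    proof
      assume "0 \<in> p ` {..d}"
      then obtain x where "x \<le> d" "p x = 0" by auto
      thus False using p_pos[of x] d by simp
    qed
    hence "M \<noteq> 0" unfolding M_def using Lcm_0_iff[of "p ` {..d}"] by auto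
    thus ?thesis by simp
  qed
  have L1: "L1 m d = r * M" unfolding L1_def M_def by simp
  define N0 where "N0 = h + L1 m d - r"
  have rM: "r \<le> r * M" using Mpos by simp
  have N0h: "h \<le> N0" unfolding N0_def L1 using rM by linarith
  define q where "q i = r * p i" for i
  define c where "c i = int (r * (k - 1) + i)" for i
  have qpos: "i < r \<Longrightarrow> q i > 0" for i unfolding q_def using r_pos p_pos by simp
  define BB where "BB = B0 m d"
  have B0_def': "BB = {f. 1 \<le> f \<and> f \<le> h - d \<and> ys m (N0 - f) = 1}"
    unfolding BB_def B0_def h_def N0_def by simp
  have B0h: "BB \<subseteq> {1..h}" unfolding B0_def' by auto
  define B0i where "B0i i = {f \<in> BB. (N0 - f) mod r = i}" for i
  define Fi where "Fi i = {f. f \<le> n \<and> ys m (n - f) = 1 \<and> (n - f) mod r = i}" for i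
  define A where "A = AA m d"
  have A_eq: "A = (\<Union>l\<in>{0..d}. (\<lambda>f. l + f) ` BB)"
    unfolding A_def AA_def Bl_def BB_def by simp
  have Ah: "A \<subseteq> {1..h}" unfolding A_eq using B0h d unfolding B0_def' by auto
  have hn: "h \<le> n" using nh unfolding h_def .
  have finA: "finite A" using Ah finite_subset by blast
  have finB0: "finite BB" using B0h finite_subset by blast

  have Fi_dvd: "int (q i) dvd int (n - f) - c i" if "f \<in> Fi i" "i < r" for f i
    using that ys_dvd[of "n - f"] unfolding Fi_def q_def c_def by auto
  have B0_dvd: "int (q ((N0 - g) mod r)) dvd int (N0 - g) - c ((N0 - g) mod r)" if "g \<in> BB" for g
    using that ys_dvd[of "N0 - g"] unfolding B0_def' q_def c_def by auto

  have sum_eq: "(\<Sum>f\<in>A. ys m (n - f)) = int (card {f\<in>A. ys m (n - f) = 1})"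
  proof -
    have "(\<Sum>f\<in>A. ys m (n - f)) = (\<Sum>f\<in>A. if f \<in> {f\<in>A. ys m (n - f) = 1} then 1 else 0)"
      by (rule sum.cong) (use ys_01 in auto)
    also have "\<dots> = (\<Sum>f\<in>A \<inter> {f\<in>A. ys m (n - f) = 1}. 1)"
      using sum.inter_restrict[OF finA, where g="\<lambda>_. (1::int)" and B="{f\<in>A. ys m (n - f) = 1}"] by simp
    also have "A \<inter> {f\<in>A. ys m (n - f) = 1} = {f\<in>A. ys m (n - f) = 1}" by auto
    finally show ?thesis by simp
  qed
  have U1: "{f\<in>A. ys m (n - f) = 1} = (\<Union>i\<in>{..<r}. A \<inter> Fi i)"
    using Ah hn r_pos unfolding Fi_def by auto
  have cardA: "card {f\<in>A. ys m (n - f) = 1} = (\<Sum>i<r. card (A \<inter> Fi i))"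
    unfolding U1 by (rule card_UN_disjoint) (use finA in \<open>auto simp: Fi_def\<close>)
  have U2: "BB = (\<Union>i\<in>{..<r}. B0i i)" using r_pos unfolding B0i_def by auto
  have cardB: "card BB = (\<Sum>i<r. card (B0i i))"
    by (subst U2, rule card_UN_disjoint) (use finB0 in \<open>auto simp: B0i_def\<close>)

  have Cbound: "card (A \<inter> Fi i) \<le> (k - 1) div p i + 1" if i: "i < r" for i
  proof -
    have "card (A \<inter> Fi i) \<le> (h - 1) div q i + 1"
    proof (rule card_pairwise_cong_le)
      show "A \<inter> Fi i \<subseteq> {1..h}" using Ah by auto
      show "q i > 0" using qpos[OF i] .
      fix x y assume x: "x \<in> A \<inter> Fi i" and y: "y \<in> A \<inter> Fi i"
      have "int (q i) dvd (int (n - y) - c i) - (int (n - x) - c i)"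
        by (rule dvd_diff) (use Fi_dvd[OF _ i] x y in auto)
      moreover have "x \<le> n" "y \<le> n" using x y unfolding Fi_def by auto
      ultimately show "int (q i) dvd int x - int y" by (simp add: of_nat_diff)
    qed
    also have "(h - 1) div q i = (k - 1) div p i"
      unfolding h q_def using div_helper1 r_pos k_pos by simp
    finally show ?thesis .
  qed

  have Tbound: "(k - 1) div p i \<le> card (B0i i)" if i: "i < r" for i
  proof -
    define e where "e = int N0 - c i"
    have sub: "{x \<in> {1..<1 + (h - d)}. int (q i) dvd int x - e} \<subseteq> B0i i"
    proof
      fix x assume x: "x \<in> {x \<in> {1..<1 + (h - d)}. int (q i) dvd int x - e}"
      have x1: "1 \<le> x" "x \<le> h - d" using x by auto
      have xN: "x \<le> N0" using x1 N0h by linarith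
      have "int (q i) dvd int x - e" using x by simp
      hence dv: "int (q i) dvd - (int x - e)" by (simp only: dvd_minus_iff)
      have "- (int x - e) = int (N0 - x) - c i" unfolding e_def using xN by (simp add: of_nat_diff)
      hence dv2: "int (r * p i) dvd int (N0 - x) - int (r * (k - 1) + i)"
        using dv unfolding q_def c_def by simp
      have "int r dvd int (N0 - x) - int (r * (k - 1) + i)"
        using dv2 by (rule dvd_trans[rotated]) simp
      hence md: "(N0 - x) mod r = i" using dvd_mod_r i by blast
      hence "ys m (N0 - x) = 1" using ys_dvd[of "N0 - x"] dv2 by simp
      thus "x \<in> B0i i" unfolding B0i_def B0_def' using x1 md by simp
    qed
    have "(h - d) div q i \<le> card {x \<in> {1..<1 + (h - d)}. int (q i) dvd int x - e}"
      by (rule card_class_ge) (use qpos[OF i] in simp)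
    also have "\<dots> \<le> card (B0i i)"
      by (rule card_mono[OF _ sub]) (use finB0 in \<open>auto simp: B0i_def\<close>)
    finally have a: "(h - d) div q i \<le> card (B0i i)" .
    have "r * (k - 1) \<le> h - d" unfolding h using d k_pos by (cases k) auto
    hence "(r * (k - 1)) div q i \<le> (h - d) div q i" by (rule div_le_mono)
    moreover have "(r * (k - 1)) div q i = (k - 1) div p i" unfolding q_def using r_pos by simp
    ultimately show ?thesis using a by linarith
  qed

  have T2r: "2 * r \<le> card (B0i i)" if i: "i < r" for i
  proof -
    have "2 * r * p i \<le> k - 1" using twor_p_le[OF i] .
    hence "2 * r \<le> (k - 1) div p i" using p_pos[OF i] by (simp add: less_eq_div_iff_mult_less_eq)
    thus ?thesis using Tbound[OF i] by linarith
  qed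

  define match where "match i = (\<exists>l\<le>d. int (q i) dvd int n - int N0 - int l)" for i
  have Cnon: "card (A \<inter> Fi i) \<le> d + 1" if i: "i < r" and nm: "\<not> match i" for i
  proof -
    define S where "S l = (\<lambda>f. l + f) ` BB \<inter> Fi i" for l
    have S1: "card (S l) \<le> 1" if l: "l \<le> d" for l
    proof -
      have "finite (S l)" unfolding S_def using finB0 by simp
      moreover have "\<forall>a\<in>S l. \<forall>b\<in>S l. a = b"
      proof (intro ballI)
        fix a b assume a: "a \<in> S l" and b: "b \<in> S l"
        obtain g1 where g1: "g1 \<in> BB" "a = l + g1" using a unfolding S_def by auto
        obtain g2 where g2: "g2 \<in> BB" "b = l + g2" using b unfolding S_def by auto
        have aF: "a \<in> Fi i" and bF: "b \<in> Fi i" using a b unfolding S_def by auto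
        have g1N: "g1 \<le> N0" "g2 \<le> N0" using g1 g2 B0h N0h by auto
        have an: "a \<le> n" "b \<le> n" using aF bF unfolding Fi_def by auto
        define i1 where "i1 = (N0 - g1) mod r"
        define i2 where "i2 = (N0 - g2) mod r"
        have i1r: "i1 < r" "i2 < r" unfolding i1_def i2_def using r_pos by auto
        have D1: "int (q i1) dvd int (N0 - g1) - c i1" using B0_dvd[OF g1(1)] unfolding i1_def .
        have D2: "int (q i2) dvd int (N0 - g2) - c i2" using B0_dvd[OF g2(1)] unfolding i2_def .
        have E1: "int (q i) dvd int (n - a) - c i" using Fi_dvd[OF aF i] .
        have E2: "int (q i) dvd int (n - b) - c i" using Fi_dvd[OF bF i] .
        have rq: "int r dvd int (q j)" for j unfolding q_def by simp
        have "int r dvd (int (n - a) - c i) - (int (N0 - g1) - c i1)"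
          using dvd_trans[OF rq E1] dvd_trans[OF rq D1] by (rule dvd_diff)
        moreover have "(int (n - a) - c i) - (int (N0 - g1) - c i1)
            = (int n - int l - int i - int N0) + int i1"
          using an g1 g1N unfolding c_def by (simp add: of_nat_diff)
        ultimately have R1: "int r dvd (int n - int l - int i - int N0) + int i1" by simp
        have "int r dvd (int (n - b) - c i) - (int (N0 - g2) - c i2)"
          using dvd_trans[OF rq E2] dvd_trans[OF rq D2] by (rule dvd_diff)
        moreover have "(int (n - b) - c i) - (int (N0 - g2) - c i2)
            = (int n - int l - int i - int N0) + int i2"
          using an g2 g1N unfolding c_def by (simp add: of_nat_diff)
        ultimately have R2: "int r dvd (int n - int l - int i - int N0) + int i2" by simp
        have "int r dvd int i1 - int i2" using dvd_diff[OF R1 R2] by simp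
        hence i12: "i1 = i2" using small_dvd_eq i1r by blast
        have ne: "i1 \<noteq> i"
        proof
          assume e: "i1 = i"
          have "int (q i) dvd (int (n - a) - c i) - (int (N0 - g1) - c i1)"
            by (rule dvd_diff) (use E1 D1 e in auto)
          moreover have "(int (n - a) - c i) - (int (N0 - g1) - c i1) = int n - int N0 - int l"
            using an g1 g1N e unfolding c_def by (simp add: of_nat_diff)
          ultimately have "match i" unfolding match_def using l by auto
          thus False using nm by blast
        qed
        have X1: "int (q i) dvd int a - int b"
        proof -
          have "int (q i) dvd (int (n - b) - c i) - (int (n - a) - c i)" using E2 E1 by (rule dvd_diff)
          thus ?thesis using an by (simp add: of_nat_diff)
        qed
        have X2: "int (q i1) dvd int a - int b"
        proof -
          have "int (q i1) dvd (int (N0 - g2) - c i1) - (int (N0 - g1) - c i1)"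
            by (rule dvd_diff) (use D1 D2 i12 in auto)
          thus ?thesis using g1N g1 g2 by (simp add: of_nat_diff)
        qed
        have ab: "a \<in> {1..h}" "b \<in> {1..h}"
        proof -
          have "a \<in> A" "b \<in> A" unfolding A_eq using g1 g2 l by auto
          thus "a \<in> {1..h}" "b \<in> {1..h}" using Ah by auto
        qed
        have "\<bar>int a - int b\<bar> < int h" using ab by auto
        hence "\<bar>int a - int b\<bar> < int (r * k)" using h by simp
        hence "int a - int b = 0"
          using two_dvd_zero[OF i i1r(1) ne[symmetric]] X1 X2 unfolding q_def by blast
        thus "a = b" by simp
      qed
      ultimately show ?thesis using card_le_Suc0_iff_eq by auto
    qed
    have "A \<inter> Fi i = (\<Union>l\<in>{0..d}. S l)" unfolding A_eq S_def by auto
    hence "card (A \<inter> Fi i) \<le> (\<Sum>l\<in>{0..d}. card (S l))" using card_UN_le[of "{0..d}" S] by simp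
    also have "\<dots> \<le> (\<Sum>l\<in>{0..d}. 1)" by (rule sum_mono) (use S1 in auto)
    finally show ?thesis by simp
  qed

  have ex_nm: "\<exists>i<r. \<not> match i"
  proof (rule ccontr)
    assume "\<not> (\<exists>i<r. \<not> match i)"
    hence all: "\<forall>i<r. match i" by blast
    obtain l0 where l0: "l0 \<le> d" "int (q 0) dvd int n - int N0 - int l0"
      using all r_pos unfolding match_def by blast
    have allq: "int (q i) dvd int n - int N0 - int l0" if i: "i < r" for i
    proof -
      obtain l where l: "l \<le> d" "int (q i) dvd int n - int N0 - int l"
        using all i unfolding match_def by blast
      have rq: "int r dvd int (q j)" for j unfolding q_def by simp
      have "int r dvd (int n - int N0 - int l0) - (int n - int N0 - int l)"
        using dvd_trans[OF rq l0(2)] dvd_trans[OF rq l(2)] by (rule dvd_diff)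
      hence "int r dvd int l - int l0" by simp
      hence "l = l0" using small_dvd_eq l(1) l0(1) d by simp
      thus ?thesis using l by simp
    qed
    define X where "X = int n - int N0 - int l0"
    have "int r dvd X" using allq[OF r_pos] unfolding q_def X_def
      by (rule dvd_trans[rotated]) simp
    then obtain Y where Y: "X = int r * Y" by (auto elim: dvdE)
    have pY: "int (p i) dvd Y" if i: "i < r" for i
    proof -
      have "int r * int (p i) dvd int r * Y" using allq[OF i] Y unfolding q_def X_def by simp
      thus ?thesis using r_pos by simp
    qed
    have "Lcm (p ` {..<r}) dvd nat \<bar>Y\<bar>"
      by (rule Lcm_least) (use pY in auto)
    hence "int (Lcm (p ` {..<r})) dvd Y" by simp
    hence "int (L2 m) dvd X" unfolding L2_def Y by simp
    hence "[int n = int N0 + int l0] (mod int (L2 m))"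
      unfolding X_def by (simp add: cong_iff_dvd_diff algebra_simps)
    hence "[n = N0 + l0] (mod L2 m)" by (metis cong_int_iff of_nat_add)
    moreover have "N0 + l0 = hh m - r + L1 m d + l0"
    proof -
      have hr: "r \<le> h" unfolding h using k_pos by simp
      thus ?thesis unfolding N0_def h_def by arith
    qed
    ultimately show False using nc l0(1) by auto
  qed
  then obtain i0 where i0: "i0 < r" "\<not> match i0" by blast

  have C0: "card (A \<inter> Fi i0) + r \<le> card (B0i i0)"
    using Cnon[OF i0] T2r[OF i0(1)] d by linarith
  have Crest: "(\<Sum>i\<in>{..<r} - {i0}. card (A \<inter> Fi i)) \<le> (\<Sum>i\<in>{..<r} - {i0}. card (B0i i) + 1)"
    by (rule sum_mono) (use Cbound Tbound in fastforce)
  have "(\<Sum>i<r. card (A \<inter> Fi i)) = card (A \<inter> Fi i0) + (\<Sum>i\<in>{..<r} - {i0}. card (A \<inter> Fi i))"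
    using i0 by (subst sum.remove[of _ i0]) auto
  also have "\<dots> \<le> card (A \<inter> Fi i0) + ((\<Sum>i\<in>{..<r} - {i0}. card (B0i i)) + (r - 1))"
  proof -
    have "(\<Sum>i\<in>{..<r} - {i0}. card (B0i i) + 1) = (\<Sum>i\<in>{..<r} - {i0}. card (B0i i)) + (r - 1)"
    proof -
      have "card ({..<r} - {i0}) = r - 1" using i0 by simp
      moreover have "(\<Sum>i\<in>{..<r} - {i0}. card (B0i i) + 1)
          = (\<Sum>i\<in>{..<r} - {i0}. card (B0i i)) + (\<Sum>i\<in>{..<r} - {i0}. 1)"
        by (rule sum.distrib)
      ultimately show ?thesis by simp
    qed
    thus ?thesis using Crest by linarith
  qed
  also have "\<dots> < card (B0i i0) + (\<Sum>i\<in>{..<r} - {i0}. card (B0i i))"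
    using C0 r_pos by linarith
  also have "\<dots> = (\<Sum>i<r. card (B0i i))"
    using i0 by (subst (2) sum.remove[of _ i0]) auto
  finally have "card {f\<in>A. ys m (n - f) = 1} < card BB" using cardA cardB by simp
  thus ?thesis using sum_eq unfolding A_def Tot_def BB_def by simp
qed

end


theorem lemma16:
  fixes m d n :: nat
  assumes "m > 0"
    and "rho m \<ge> 2"
    and "d \<le> rho m - 1"
    and "n \<ge> hh m"
    and "\<forall>j\<in>{0..d}. \<not> [n = hh m - rho m + L1 m d + j] (mod L2 m)"
  shows "(\<Sum>f\<in>AA m d. ys m (n - f)) < int (Tot m d)"
proof -
  interpret L16 m using assms(1,2) by unfold_locales
  have "d < rho m" using assms(2,3) by linarith
  thus ?thesis using main assms(4,5) by blast
qed

end
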